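(* Let $m\ge 1$ be a fixed integer and $c>\frac{1}{m}$ a fixed constant, and let $T$ be the total population of the $m$-fold Poisson branching process $T^{po}_{m,c}$. Then there exists a positive constant $C=C(m,c)$ such that for every positive integer $K$, $$\Pr(T=K)<e^{-CK}.$$
   Context: An $m$-fold Poisson random variable with parameter $c$ is a random variable $Z$ with $\Pr(Z=k)=e^{-c}\frac{c^{k/m}}{(k/m)!}$ if $m\mid k$ and $\Pr(Z=k)=0$ otherwise ($k\ge 0$); i.e. $m$ times a Poisson$(c)$ variable. The $m$-fold Poisson branching process $T^{po}_{m,c}$ is the Galton–Watson process $Y_0=1$, $Y_t=Y_{t-1}-1+Z_t$ for $t\ge1$, where $Z_1,Z_2,\dots$ are i.i.d. $m$-fold Poisson variables with parameter $c$. Its total population $T$ is the least $t$ with $Y_t=0$ (the total number of nodes created, including the root), with $T=\infty$ if no such $t$ exists. *)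

theory Defs
  imports "HOL-Probability.Probability" "HOL-Library.Extended_Nat"
begin

definition mfold_poisson_pmf :: "nat \<Rightarrow> real \<Rightarrow> nat pmf" where
  "mfold_poisson_pmf m c = map_pmf (\<lambda>k. m * k) (poisson_pmf c)"

text \<open>The walk Y_0 = 1, Y_t = Y_(t-1) - 1 + Z_t; Z indexed from 1 (Z 0 unused).\<close>
definition bp_Y :: "(nat \<Rightarrow> 'a \<Rightarrow> nat) \<Rightarrow> nat \<Rightarrow> 'a \<Rightarrow> int" where
  "bp_Y Z t \<omega> = 1 - int t + (\<Sum>i\<in>{1..t}. int (Z i \<omega>))"

definition bp_T :: "(nat \<Rightarrow> 'a \<Rightarrow> nat) \<Rightarrow> 'a \<Rightarrow> enat" where
  "bp_T Z \<omega> = (if \<exists>t. bp_Y Z t \<omega> = 0 then enat (LEAST t. bp_Y Z t \<omega> = 0) else \<infinity>)"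

end

theory Submission
  imports Defs
begin
lemma ln_strict: assumes "x > (1::real)" shows "ln x < x - 1"
proof -
  have s: "sqrt x > 0" using assms by simp
  have "ln x = 2 * ln (sqrt x)" using assms by (simp add: ln_sqrt)
  also have "\<dots> \<le> 2 * (sqrt x - 1)" using ln_le_minus_one[OF s] by simp
  also have "\<dots> < x - 1"
  proof -
    have "sqrt x \<noteq> 1" using assms by auto
    hence "(sqrt x - 1)^2 > 0" by simp
    thus ?thesis using assms by (simp add: power2_eq_square algebra_simps)
  qed
  finally show ?thesis .
qed

lemma poisson_mgf:
  assumes "c > 0"
  shows "(\<integral>\<^sup>+k. ennreal (exp (a - b * real k)) \<partial>measure_pmf (poisson_pmf c))
       = ennreal (exp (a + c * (exp (-b) - 1)))"
proof -
  have eq: "\<And>k. pmf (poisson_pmf c) k * exp (a - b * real k) = exp (a - c) * ((c * exp (-b))^k /\<^sub>R fact k)"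
    using assms by (simp add: power_mult_distrib exp_diff exp_minus field_simps flip: exp_of_nat_mult)
  have "(\<lambda>k. exp (a - c) * ((c * exp (-b))^k /\<^sub>R fact k)) sums (exp (a - c) * exp (c * exp (-b)))"
    by (intro sums_mult exp_converges)
  hence sm: "(\<lambda>k. pmf (poisson_pmf c) k * exp (a - b * real k)) sums (exp (a + c * (exp (-b) - 1)))"
    by (simp add: eq mult_exp_exp algebra_simps)
  have "(\<integral>\<^sup>+k. ennreal (exp (a - b * real k)) \<partial>measure_pmf (poisson_pmf c))
     = (\<integral>\<^sup>+k. ennreal (pmf (poisson_pmf c) k * exp (a - b * real k)) \<partial>count_space UNIV)"
    by (simp add: nn_integral_measure_pmf ennreal_mult)
  also have "\<dots> = (\<Sum>k. ennreal (pmf (poisson_pmf c) k * exp (a - b * real k)))"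
    by (simp add: nn_integral_count_space_nat)
  also have "\<dots> = ennreal (\<Sum>k. pmf (poisson_pmf c) k * exp (a - b * real k))"
    using sm by (intro suminf_ennreal2) (auto simp: sums_iff)
  also have "\<dots> = ennreal (exp (a + c * (exp (-b) - 1)))" using sm by (simp add: sums_iff)
  finally show ?thesis .
qed

theorem lemma3:
  fixes M :: "'a measure" and Z :: "nat \<Rightarrow> 'a \<Rightarrow> nat" and m :: nat and c :: real
  assumes "prob_space M"
    and "m \<ge> 1" and "c > 1 / real m"
    and "prob_space.indep_vars M (\<lambda>_. count_space UNIV) Z {1..}"
    and "\<And>i. i \<ge> 1 \<Longrightarrow> Z i \<in> measurable M (count_space UNIV)"
    and "\<And>i. i \<ge> 1 \<Longrightarrow> distr M (count_space UNIV) (Z i) = measure_pmf (mfold_poisson_pmf m c)"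
  shows "\<exists>C>0. \<forall>K::nat. K \<ge> 1 \<longrightarrow>
           measure M {\<omega> \<in> space M. bp_T Z \<omega> = enat K} < exp (- C * real K)"
proof -
  interpret prob_space M by fact
  define x where "x = c * real m"
  have m0: "real m > 0" using assms(2) by simp
  have x1: "x > 1" using assms(3) m0 by (simp add: x_def field_simps)
  have c0: "c > 0" using x1 m0 unfolding x_def by (smt (verit) mult_nonpos_nonneg of_nat_0_le_iff)
  define \<theta> where "\<theta> = ln x / real m"
  define f where "f = \<theta> + 1 / real m - c"
  have fneg: "f < 0"
  proof -
    have "f = (ln x + 1 - x) / real m" using m0 by (simp add: f_def \<theta>_def x_def field_simps)
    moreover have "ln x + 1 - x < 0" using ln_strict[OF x1] by simp
    ultimately show ?thesis using m0 by (simp add: divide_neg_pos)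
  qed
  define g where "g = (\<lambda>n::nat. ennreal (exp (\<theta> - \<theta> * real n)))"
  have mgf: "(\<integral>\<^sup>+\<omega>. g (Z i \<omega>) \<partial>M) = ennreal (exp f)" if i: "i \<ge> 1" for i
  proof -
    have "(\<integral>\<^sup>+\<omega>. g (Z i \<omega>) \<partial>M) = (\<integral>\<^sup>+y. g y \<partial>distr M (count_space UNIV) (Z i))"
      using assms(5)[OF i] by (simp add: nn_integral_distr)
    also have "\<dots> = (\<integral>\<^sup>+y. g y \<partial>measure_pmf (map_pmf (\<lambda>k. m * k) (poisson_pmf c)))"
      using assms(6)[OF i] by (simp add: mfold_poisson_pmf_def)
    also have "\<dots> = (\<integral>\<^sup>+k. g (m * k) \<partial>measure_pmf (poisson_pmf c))"
      by (simp add: map_pmf_rep_eq nn_integral_distr)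
    also have "\<dots> = (\<integral>\<^sup>+k. ennreal (exp (\<theta> - (\<theta> * real m) * real k)) \<partial>measure_pmf (poisson_pmf c))"
      by (simp add: g_def mult.assoc)
    also have "\<dots> = ennreal (exp (\<theta> + c * (exp (- (\<theta> * real m)) - 1)))"
      by (rule poisson_mgf[OF c0])
    also have "exp (- (\<theta> * real m)) = 1 / x"
      using m0 x1 by (simp add: \<theta>_def exp_minus inverse_eq_divide)
    also have "\<theta> + c * (1 / x - 1) = f"
      using m0 c0 by (simp add: f_def x_def field_simps)
    finally show ?thesis .
  qed
  have bound: "measure M {\<omega> \<in> space M. bp_T Z \<omega> = enat K} \<le> exp (f * real K)" if K: "K \<ge> 1" for K
  proof -
    define B where "B = {\<omega> \<in> space M. (\<Sum>i\<in>{1..K}. Z i \<omega>) \<le> K}"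
    have Zm[measurable]: "Z i \<in> measurable M (count_space UNIV)" if "i \<in> {1..K}" for i
      using assms(5) that by auto
    have Bm: "B \<in> sets M" unfolding B_def by measurable
    have sub: "{\<omega> \<in> space M. bp_T Z \<omega> = enat K} \<subseteq> B"
    proof
      fix \<omega> assume "\<omega> \<in> {\<omega> \<in> space M. bp_T Z \<omega> = enat K}"
      hence \<omega>: "\<omega> \<in> space M" "bp_T Z \<omega> = enat K" by auto
      hence ex: "\<exists>t. bp_Y Z t \<omega> = 0" and L: "(LEAST t. bp_Y Z t \<omega> = 0) = K"
        by (auto simp: bp_T_def split: if_splits)
      have "bp_Y Z K \<omega> = 0" using LeastI_ex[OF ex] L by simp
      hence "int (\<Sum>i\<in>{1..K}. Z i \<omega>) = int K - 1" by (simp add: bp_Y_def)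
      hence "(\<Sum>i\<in>{1..K}. Z i \<omega>) \<le> K" by linarith
      thus "\<omega> \<in> B" using \<omega> by (simp add: B_def)
    qed
    have ind: "indep_vars (\<lambda>_. borel) (\<lambda>i \<omega>. g (Z i \<omega>)) {1..K}"
      by (rule indep_vars_compose2[OF indep_vars_subset[OF assms(4)]]) auto
    have "emeasure M B = (\<integral>\<^sup>+\<omega>. indicator B \<omega> \<partial>M)" using Bm by simp
    also have "\<dots> \<le> (\<integral>\<^sup>+\<omega>. (\<Prod>i\<in>{1..K}. g (Z i \<omega>)) \<partial>M)"
    proof (rule nn_integral_mono)
      fix \<omega> assume "\<omega> \<in> space M"
      show "indicator B \<omega> \<le> (\<Prod>i\<in>{1..K}. g (Z i \<omega>))"
      proof (cases "\<omega> \<in> B")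
        case True
        have "(\<Prod>i\<in>{1..K}. g (Z i \<omega>)) = ennreal (\<Prod>i\<in>{1..K}. exp (\<theta> - \<theta> * real (Z i \<omega>)))"
          unfolding g_def by (rule prod_ennreal) simp
        also have "(\<Prod>i\<in>{1..K}. exp (\<theta> - \<theta> * real (Z i \<omega>))) = exp (\<Sum>i\<in>{1..K}. (\<theta> - \<theta> * real (Z i \<omega>)))"
          by (simp add: exp_sum)
        also have "(\<Sum>i\<in>{1..K}. (\<theta> - \<theta> * real (Z i \<omega>))) = \<theta> * (real K - real (\<Sum>i\<in>{1..K}. Z i \<omega>))"
          by (simp add: sum_subtractf sum_distrib_left right_diff_distrib)
        finally have eq: "(\<Prod>i\<in>{1..K}. g (Z i \<omega>)) = ennreal (exp (\<theta> * (real K - real (\<Sum>i\<in>{1..K}. Z i \<omega>))))" .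
        have "\<theta> > 0" using x1 m0 by (simp add: \<theta>_def)
        moreover have "real (\<Sum>i\<in>{1..K}. Z i \<omega>) \<le> real K" using True unfolding B_def by (metis (mono_tags, lifting) mem_Collect_eq of_nat_le_iff)
        ultimately have "1 \<le> exp (\<theta> * (real K - real (\<Sum>i\<in>{1..K}. Z i \<omega>)))" by simp
        thus ?thesis using True eq by simp
      qed simp
    qed
    also have "\<dots> = (\<Prod>i\<in>{1..K}. \<integral>\<^sup>+\<omega>. g (Z i \<omega>) \<partial>M)"
      by (rule indep_vars_nn_integral[OF _ ind]) auto
    also have "\<dots> = (\<Prod>i\<in>{1..K}. ennreal (exp f))" by (intro prod.cong) (auto simp: mgf)
    also have "\<dots> = ennreal (exp (f * real K))"
      by (simp add: ennreal_power exp_of_nat_mult[symmetric] mult.commute)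
    finally have "emeasure M B \<le> ennreal (exp (f * real K))" .
    hence mB: "measure M B \<le> exp (f * real K)"
      by (simp add: emeasure_eq_measure)
    show ?thesis
    proof (cases "{\<omega> \<in> space M. bp_T Z \<omega> = enat K} \<in> sets M")
      case True
      thus ?thesis using finite_measure_mono[OF sub Bm] mB by simp
    next
      case False
      thus ?thesis by (simp add: measure_notin_sets)
    qed
  qed
  show ?thesis
  proof (intro exI[of _ "- f / 2"] conjI allI impI)
    show "- f / 2 > 0" using fneg by simp
    fix K :: nat assume K: "K \<ge> 1"
    have "exp (f * real K) < exp (- (- f / 2) * real K)"
      using fneg K by simp
    thus "measure M {\<omega> \<in> space M. bp_T Z \<omega> = enat K} < exp (- (- f / 2) * real K)"
      using bound[OF K] by linarith
  qed
qed

end
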